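(* Let $N,K,T\ge1$, let $\mathbf{W}\in\mathbb{R}^{N\times K}$ have linearly independent columns $\mathbf{w}_1,\dots,\mathbf{w}_K$, let $\bar{\boldsymbol{\Psi}}_{\mathrm{id}}\in\mathbb{R}^{N\times N}$ and $\bar{\boldsymbol{\Psi}}_{\mathrm{f}}\in\mathbb{R}^{K\times K}$ be diagonal with strictly positive diagonal entries, and let $\alpha_1,\dots,\alpha_T>0$, $\beta_1,\dots,\beta_T>0$ with $\sum_t\alpha_t=\sum_t\beta_t=1$. For $t=1,\dots,T$ set $\boldsymbol{\Psi}_{\mathrm{id},t}=\alpha_t\bar{\boldsymbol{\Psi}}_{\mathrm{id}}$, $\boldsymbol{\Psi}_{\mathrm{f},t}=\beta_t\bar{\boldsymbol{\Psi}}_{\mathrm{f}}$ and $\mathbf{G}_t=\left(\boldsymbol{\Psi}_{\mathrm{id},t}+\mathbf{W}\boldsymbol{\Psi}_{\mathrm{f},t}\mathbf{W}^\top\right)^{-1}$. Let $\mathbf{x}_0\in\mathbb{R}^N$. Then the schedule $$\mathbf{v}_t^*=\alpha_t\mathbf{x}_0+(\beta_t-\alpha_t)\,\mathbf{W}\left(\bar{\boldsymbol{\Psi}}_{\mathrm{f}}^{-1}+\mathbf{W}^\top\bar{\boldsymbol{\Psi}}_{\mathrm{id}}^{-1}\mathbf{W}\right)^{-1}\mathbf{W}^\top\bar{\boldsymbol{\Psi}}_{\mathrm{id}}^{-1}\mathbf{x}_0,\qquad t=1,\dots,T,$$ is optimal for the problem of minimizing $\sum_{t=1}^T\tfrac12\mathbf{v}_t^\top\mathbf{G}_t\mathbf{v}_t$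 subject to $\sum_{t=1}^T\mathbf{v}_t=\mathbf{x}_0$. Equivalently, $\mathbf{v}_t^*=\alpha_t\mathbf{x}_0+(\beta_t-\alpha_t)\sum_{k=1}^K(\widehat{\mathbf{w}}_k^\top\mathbf{x}_0)\,\mathbf{w}_k$, where $\widehat{\mathbf{w}}_k$ is the $k$-th column of $\widehat{\mathbf{W}}=\bar{\boldsymbol{\Psi}}_{\mathrm{id}}^{-1}\mathbf{W}\left(\bar{\boldsymbol{\Psi}}_{\mathrm{f}}^{-1}+\mathbf{W}^\top\bar{\boldsymbol{\Psi}}_{\mathrm{id}}^{-1}\mathbf{W}\right)^{-1}$.
   Context: $\alpha_t$ and $\beta_t$ are the intraday activity profiles of single-stock and index-fund liquidity providers respectively. *)

theory Defs
  imports "HOL-Analysis.Analysis"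
begin

definition pos_diag :: "real^'n^'n \<Rightarrow> bool" where
  "pos_diag D \<longleftrightarrow> (\<forall>i j. i \<noteq> j \<longrightarrow> D $ i $ j = 0) \<and> (\<forall>i. D $ i $ i > 0)"

definition indep_columns :: "real^'k^'n \<Rightarrow> bool" where
  "indep_columns W \<longleftrightarrow> (\<forall>c. W *v c = 0 \<longrightarrow> c = 0)"

definition sched_cost :: "nat \<Rightarrow> (nat \<Rightarrow> real^'n^'n) \<Rightarrow> (nat \<Rightarrow> real^'n) \<Rightarrow> real" where
  "sched_cost T G v = (\<Sum>t=1..T. (1/2) * (v t \<bullet> (G t *v v t)))"

end

theory Submission
  imports Defs
begin


definition pdm :: "real^'n^'n \<Rightarrow> bool" where
  "pdm M \<longleftrightarrow> (\<forall>x. x \<noteq> 0 \<longrightarrow> 0 < x \<bullet> (M *v x))"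

definition psdm :: "real^'n^'n \<Rightarrow> bool" where
  "psdm M \<longleftrightarrow> (\<forall>x. 0 \<le> x \<bullet> (M *v x))"

lemma inv_props:
  fixes A :: "real^'n^'n"
  assumes "invertible A"
  shows "A ** matrix_inv A = mat 1" "matrix_inv A ** A = mat 1"
proof -
  have "\<exists>A'. A ** A' = mat 1 \<and> A' ** A = mat 1" using assms unfolding invertible_def by blast
  then have "A ** matrix_inv A = mat 1 \<and> matrix_inv A ** A = mat 1"
    unfolding matrix_inv_def by (rule someI_ex)
  then show "A ** matrix_inv A = mat 1" "matrix_inv A ** A = mat 1" by auto
qed

lemma inv_vec:
  fixes A :: "real^'n^'n"
  assumes "invertible A"
  shows "A *v (matrix_inv A *v x) = x" "matrix_inv A *v (A *v x) = x"
  using inv_props[OF assms] by (simp_all add: matrix_vector_mul_assoc)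

lemma pdm_psdm: "pdm (M::real^'n^'n) \<Longrightarrow> psdm M"
  unfolding pdm_def psdm_def
proof (intro allI impI)
  fix x :: "real^'n" assume h: "\<forall>x. x \<noteq> 0 \<longrightarrow> 0 < x \<bullet> (M *v x)"
  show "0 \<le> x \<bullet> (M *v x)"
  proof (cases "x = 0")
    case True then show ?thesis by simp
  next
    case False then show ?thesis using h less_imp_le by blast
  qed
qed

lemma pdm_invertible:
  fixes M :: "real^'n^'n"
  assumes "pdm M" shows "invertible M"
proof -
  have "\<forall>x. M *v x = 0 \<longrightarrow> x = 0" using assms unfolding pdm_def
    by (metis inner_zero_right less_irrefl)
  then show ?thesis by (simp add: invertible_left_inverse matrix_left_invertible_ker)
qed

lemma dot_transpose: "(x::real^'n) \<bullet> (transpose W *v z) = (W *v x) \<bullet> z"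
proof -
  have "x \<bullet> (transpose W *v z) = (z v* W) \<bullet> x" by (simp add: inner_commute)
  also have "\<dots> = z \<bullet> (W *v x)" by (rule dot_lmul_matrix)
  also have "\<dots> = (W *v x) \<bullet> z" by (rule inner_commute)
  finally show ?thesis .
qed

lemma pdm_inv:
  fixes M :: "real^'n^'n"
  assumes "pdm M" shows "pdm (matrix_inv M)"
  unfolding pdm_def
proof (intro allI impI)
  fix x :: "real^'n" assume x: "x \<noteq> 0"
  have I: "invertible M" using pdm_invertible[OF assms] .
  define y where "y = matrix_inv M *v x"
  have xy: "x = M *v y" unfolding y_def using inv_vec(1)[OF I] by simp
  have "y \<noteq> 0" using x xy by auto
  then have "0 < y \<bullet> (M *v y)" using assms unfolding pdm_def by blast
  moreover have "x \<bullet> (matrix_inv M *v x) = y \<bullet> (M *v y)"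
    unfolding y_def[symmetric] by (subst xy) (simp only: inner_commute)
  ultimately show "0 < x \<bullet> (matrix_inv M *v x)" by simp
qed

lemma psdm_congr:
  fixes M :: "real^'n^'n" and W :: "real^'k^'n"
  assumes "psdm M" shows "psdm (transpose W ** M ** W)"
  unfolding psdm_def
proof
  fix x :: "real^'k"
  have "x \<bullet> ((transpose W ** M ** W) *v x) = x \<bullet> (transpose W *v (M *v (W *v x)))"
    by (simp add: matrix_vector_mul_assoc matrix_mul_assoc)
  also have "\<dots> = (W *v x) \<bullet> (M *v (W *v x))" by (rule dot_transpose)
  finally show "0 \<le> x \<bullet> ((transpose W ** M ** W) *v x)" using assms unfolding psdm_def by simp
qed

lemma pdm_add: "pdm A \<Longrightarrow> psdm B \<Longrightarrow> pdm (A + B)"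
  unfolding pdm_def psdm_def
  by (simp add: matrix_vector_mult_add_rdistrib inner_add_right add_pos_nonneg)

lemma smat_vec: "((c::real) *\<^sub>R A) *v x = c *\<^sub>R (A *v (x::real^'n))"
  by (simp add: vec_eq_iff matrix_vector_mult_def sum_distrib_left mult.assoc)

lemma pdm_scale: "pdm A \<Longrightarrow> (c::real) > 0 \<Longrightarrow> pdm (c *\<^sub>R A)"
  unfolding pdm_def by (simp add: smat_vec)

lemma psdm_scale: "psdm A \<Longrightarrow> (c::real) \<ge> 0 \<Longrightarrow> psdm (c *\<^sub>R A)"
  unfolding psdm_def by (simp add: smat_vec)

lemma transpose_add: "transpose (A + B) = transpose A + transpose (B::real^'n^'m)"
  by (simp add: vec_eq_iff transpose_def)

lemma sym_inv:
  fixes A :: "real^'n^'n"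
  assumes I: "invertible A" and S: "transpose A = A"
  shows "transpose (matrix_inv A) = matrix_inv A"
proof -
  have "transpose (matrix_inv A) ** A = mat 1"
    using inv_props(1)[OF I] S by (metis matrix_transpose_mul transpose_mat)
  then have "transpose (matrix_inv A) = transpose (matrix_inv A) ** (A ** matrix_inv A)"
    using inv_props(1)[OF I] by simp
  also have "\<dots> = matrix_inv A" by (simp add: matrix_mul_assoc \<open>transpose (matrix_inv A) ** A = mat 1\<close>)
  finally show ?thesis .
qed

lemma pos_diag_vec:
  assumes "pos_diag D"
  shows "(D *v x) $ i = D $ i $ i * x $ i"
proof -
  have "(D *v x) $ i = (\<Sum>j\<in>UNIV. D $ i $ j * x $ j)" by (simp add: matrix_vector_mult_def)
  also have "\<dots> = (\<Sum>j\<in>UNIV. if j = i then D $ i $ i * x $ i else 0)"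
    by (rule sum.cong) (use assms in \<open>auto simp: pos_diag_def\<close>)
  also have "\<dots> = D $ i $ i * x $ i" by simp
  finally show ?thesis .
qed

lemma pos_diag_pdm:
  fixes D :: "real^'n^'n"
  assumes "pos_diag D" shows "pdm D" "transpose D = D"
proof -
  show "transpose D = D" using assms unfolding pos_diag_def transpose_def
    by (simp add: vec_eq_iff) metis
  show "pdm D" unfolding pdm_def
  proof (intro allI impI)
    fix x :: "real^'n" assume "x \<noteq> 0"
    then obtain i where i: "x $ i \<noteq> 0" by (metis vec_eq_iff zero_index)
    have "x \<bullet> (D *v x) = (\<Sum>j\<in>UNIV. D $ j $ j * (x $ j)^2)"
      by (simp add: inner_vec_def pos_diag_vec[OF assms] power2_eq_square mult_ac)
    moreover have "0 < (\<Sum>j\<in>UNIV. D $ j $ j * (x $ j)^2)"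
    proof (rule sum_pos2[where i=i])
      show "0 < D $ i $ i * (x $ i)^2" using assms i unfolding pos_diag_def by simp
      show "\<And>j. j \<in> UNIV \<Longrightarrow> 0 \<le> D $ j $ j * (x $ j)^2" using assms unfolding pos_diag_def
        by (simp add: less_imp_le)
    qed auto
    ultimately show "0 < x \<bullet> (D *v x)" by simp
  qed
qed

lemma colsum:
  fixes Q W :: "real^'k^'n" and x :: "real^'n"
  shows "(\<Sum>k\<in>UNIV. (column k Q \<bullet> x) *\<^sub>R column k W) = W *v (transpose Q *v x)"
  by (simp add: vec_eq_iff matrix_vector_mult_def transpose_def column_def inner_vec_def
      sum_distrib_left sum_distrib_right mult_ac)

theorem proposition4:
  fixes W :: "real^'k^'n" and Psi_id :: "real^'n^'n" and Psi_f :: "real^'k^'k"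
    and \<alpha> \<beta> :: "nat \<Rightarrow> real" and T :: nat and x0 :: "real^'n"
    and G :: "nat \<Rightarrow> real^'n^'n" and vstar :: "nat \<Rightarrow> real^'n"
    and What :: "real^'k^'n"
  assumes T1: "T \<ge> 1"
    and W_indep: "indep_columns W"
    and Pid: "pos_diag Psi_id" and Pf: "pos_diag Psi_f"
    and alpha_pos: "\<forall>t\<in>{1..T}. \<alpha> t > 0" and beta_pos: "\<forall>t\<in>{1..T}. \<beta> t > 0"
    and alpha_sum: "(\<Sum>t=1..T. \<alpha> t) = 1" and beta_sum: "(\<Sum>t=1..T. \<beta> t) = 1"
    and G_def: "\<forall>t. G t = matrix_inv (\<alpha> t *\<^sub>R Psi_id + W ** (\<beta> t *\<^sub>R Psi_f) ** transpose W)"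
    and vstar_def: "\<forall>t. vstar t = \<alpha> t *\<^sub>R x0 + (\<beta> t - \<alpha> t) *\<^sub>R
         ((W ** matrix_inv (matrix_inv Psi_f + transpose W ** matrix_inv Psi_id ** W)
             ** transpose W ** matrix_inv Psi_id) *v x0)"
    and What_def: "What = matrix_inv Psi_id ** W **
         matrix_inv (matrix_inv Psi_f + transpose W ** matrix_inv Psi_id ** W)"
  shows "(\<Sum>t=1..T. vstar t) = x0
    \<and> (\<forall>v :: nat \<Rightarrow> real^'n. (\<Sum>t=1..T. v t) = x0 \<longrightarrow> sched_cost T G vstar \<le> sched_cost T G v)
    \<and> (\<forall>t\<in>{1..T}. vstar t = \<alpha> t *\<^sub>R x0 + (\<beta> t - \<alpha> t) *\<^sub>R
         (\<Sum>k\<in>UNIV. (column k What \<bullet> x0) *\<^sub>R column k W))"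
proof -
  define Di where "Di = matrix_inv Psi_id"
  define Fi where "Fi = matrix_inv Psi_f"
  define A where "A = Fi + transpose W ** Di ** W"
  define Ai where "Ai = matrix_inv A"
  define P where "P = W ** Ai ** transpose W ** Di"
  have vs0: "\<And>t. vstar t = \<alpha> t *\<^sub>R x0 + (\<beta> t - \<alpha> t) *\<^sub>R (P *v x0)"
    using vstar_def unfolding P_def Ai_def A_def Fi_def Di_def by simp
  have What': "What = Di ** W ** Ai"
    using What_def unfolding Ai_def A_def Fi_def Di_def by simp
  have pD: "pdm Psi_id" and sD: "transpose Psi_id = Psi_id" using pos_diag_pdm[OF Pid] by auto
  have pF: "pdm Psi_f" and sF: "transpose Psi_f = Psi_f" using pos_diag_pdm[OF Pf] by auto
  have ID: "invertible Psi_id" and IF: "invertible Psi_f" using pD pF pdm_invertible by auto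
  have pDi: "pdm Di" and pFi: "pdm Fi" unfolding Di_def Fi_def using pD pF pdm_inv by auto
  have sDi: "transpose Di = Di" unfolding Di_def using sym_inv[OF ID sD] .
  have sFi: "transpose Fi = Fi" unfolding Fi_def using sym_inv[OF IF sF] .
  have pA: "pdm A" unfolding A_def by (rule pdm_add[OF pFi psdm_congr[OF pdm_psdm[OF pDi]]])
  have IA: "invertible A" using pdm_invertible[OF pA] .
  have sA: "transpose A = A" unfolding A_def
    by (simp add: transpose_add matrix_transpose_mul sDi sFi matrix_mul_assoc)
  have sAi: "transpose Ai = Ai" unfolding Ai_def using sym_inv[OF IA sA] .
  define lam where "lam = Di *v (x0 - P *v x0)"
  define y where "y = transpose W *v (Di *v x0)"
  define z where "z = Ai *v y"
  have Dlam: "Psi_id *v lam = x0 - P *v x0" unfolding lam_def Di_def using inv_vec[OF ID] by simp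
  have Px: "P *v x0 = W *v z" unfolding P_def z_def y_def by (simp add: matrix_vector_mul_assoc matrix_mul_assoc)
  have Az: "A *v z = y" unfolding z_def Ai_def using inv_vec[OF IA] by simp
  have "transpose W *v (Di *v (W *v z)) = (transpose W ** Di ** W) *v z"
    by (simp add: matrix_vector_mul_assoc matrix_mul_assoc)
  also have "\<dots> = (A - Fi) *v z" unfolding A_def by simp
  also have "\<dots> = y - Fi *v z" using Az by (simp add: matrix_vector_mult_diff_rdistrib)
  finally have aux: "transpose W *v (Di *v (W *v z)) = y - Fi *v z" .
  have "transpose W *v lam = transpose W *v (Di *v x0) - transpose W *v (Di *v (P *v x0))"
    unfolding lam_def by (simp only: matrix_vector_mult_diff_distrib)
  also have "\<dots> = y - (y - Fi *v z)" by (simp only: y_def[symmetric] Px aux)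
  also have "\<dots> = Fi *v z" by simp
  finally have WTlam: "transpose W *v lam = Fi *v z" .
  have Flam: "(W ** Psi_f ** transpose W) *v lam = P *v x0"
  proof -
    have "(W ** Psi_f ** transpose W) *v lam = W *v (Psi_f *v (transpose W *v lam))"
      by (simp only: matrix_vector_mul_assoc matrix_mul_assoc)
    also have "\<dots> = W *v z" by (simp only: WTlam Fi_def inv_vec(1)[OF IF])
    finally show ?thesis using Px by simp
  qed
  define M where "M t = \<alpha> t *\<^sub>R Psi_id + W ** (\<beta> t *\<^sub>R Psi_f) ** transpose W" for t
  have Mexp: "M t = \<alpha> t *\<^sub>R Psi_id + \<beta> t *\<^sub>R (W ** Psi_f ** transpose W)" for t
    unfolding M_def by (simp add: matrix_scalar_ac scalar_matrix_assoc)
  have vsM: "vstar t = M t *v lam" for t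
    unfolding Mexp vs0
    by (simp add: matrix_vector_mult_add_rdistrib smat_vec Dlam Flam algebra_simps)
  have pM: "pdm (M t)" if "t \<in> {1..T}" for t
  proof -
    have "psdm (transpose (transpose W) ** Psi_f ** transpose W)"
      by (rule psdm_congr[OF pdm_psdm[OF pF]])
    then have "psdm (\<beta> t *\<^sub>R (W ** Psi_f ** transpose W))"
      using beta_pos that by (intro psdm_scale) (auto simp: less_imp_le)
    moreover have "pdm (\<alpha> t *\<^sub>R Psi_id)" using alpha_pos that pD by (intro pdm_scale) auto
    ultimately show ?thesis unfolding Mexp by (metis pdm_add)
  qed
  have sM: "transpose (M t) = M t" for t
    unfolding Mexp by (simp add: transpose_add transpose_scalar matrix_transpose_mul sD sF matrix_mul_assoc)
  have GM: "G t = matrix_inv (M t)" for t using G_def M_def by simp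
  have Glam: "G t *v vstar t = lam" if "t \<in> {1..T}" for t
    using vsM GM inv_vec(2)[OF pdm_invertible[OF pM[OF that]]] by simp
  have part1: "(\<Sum>t=1..T. vstar t) = x0"
    unfolding vs0
    using alpha_sum beta_sum by (simp add: sum.distrib scaleR_sum_left[symmetric] sum_subtractf)
  have part2: "\<forall>v :: nat \<Rightarrow> real^'n. (\<Sum>t=1..T. v t) = x0 \<longrightarrow> sched_cost T G vstar \<le> sched_cost T G v"
  proof (intro allI impI)
    fix v :: "nat \<Rightarrow> real^'n" assume sv: "(\<Sum>t=1..T. v t) = x0"
    define d where "d t = v t - vstar t" for t
    have per: "vstar t \<bullet> (G t *v vstar t) + 2 * (d t \<bullet> lam) \<le> v t \<bullet> (G t *v v t)"
      if tT: "t \<in> {1..T}" for t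
    proof -
      have vt: "v t = vstar t + d t" unfolding d_def by simp
      have c1: "d t \<bullet> (G t *v vstar t) = d t \<bullet> lam" using Glam[OF tT] by simp
      have "vstar t \<bullet> (G t *v d t) = (M t *v lam) \<bullet> (G t *v d t)" using vsM by simp
      also have "\<dots> = lam \<bullet> (transpose (M t) *v (G t *v d t))" by (rule dot_transpose[symmetric])
      also have "\<dots> = lam \<bullet> d t"
        using sM GM inv_vec(1)[OF pdm_invertible[OF pM[OF tT]]] by simp
      finally have c2: "vstar t \<bullet> (G t *v d t) = d t \<bullet> lam" by (simp add: inner_commute)
      have c3: "0 \<le> d t \<bullet> (G t *v d t)"
        using pdm_psdm[OF pdm_inv[OF pM[OF tT]]] GM unfolding psdm_def by simp
      have "v t \<bullet> (G t *v v t) = vstar t \<bullet> (G t *v vstar t) + vstar t \<bullet> (G t *v d t)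
          + d t \<bullet> (G t *v vstar t) + d t \<bullet> (G t *v d t)"
        unfolding vt by (simp add: matrix_vector_right_distrib inner_add_left inner_add_right)
      then show ?thesis using c1 c2 c3 by linarith
    qed
    have sd: "(\<Sum>t=1..T. d t) = 0" unfolding d_def using sv part1 by (simp add: sum_subtractf)
    have "(\<Sum>t=1..T. d t \<bullet> lam) = 0" using sd by (simp add: inner_sum_left[symmetric])
    then have "sched_cost T G vstar = (\<Sum>t=1..T. (1/2) * (vstar t \<bullet> (G t *v vstar t) + 2 * (d t \<bullet> lam)))"
      unfolding sched_cost_def by (simp add: sum.distrib distrib_left sum_distrib_left[symmetric])
    also have "\<dots> \<le> sched_cost T G v"
      unfolding sched_cost_def by (intro sum_mono mult_left_mono per) auto
    finally show "sched_cost T G vstar \<le> sched_cost T G v" .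
  qed
  have part3: "\<forall>t\<in>{1..T}. vstar t = \<alpha> t *\<^sub>R x0 + (\<beta> t - \<alpha> t) *\<^sub>R
         (\<Sum>k\<in>UNIV. (column k What \<bullet> x0) *\<^sub>R column k W)"
  proof -
    have "(\<Sum>k\<in>UNIV. (column k What \<bullet> x0) *\<^sub>R column k W) = W *v (transpose What *v x0)"
      by (rule colsum)
    also have "\<dots> = P *v x0" unfolding What' P_def
      by (simp add: matrix_transpose_mul sAi sDi matrix_vector_mul_assoc matrix_mul_assoc)
    finally show ?thesis using vs0 by simp
  qed
  show ?thesis using part1 part2 part3 by blast
qed

end
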